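(* Let $\Gamma$ be a routing game, $\mathbf{x}$ a flow in $\Gamma$, and $\mathbf{y},\mathbf{y}'\in\mathbb{R}^E$ congestion vectors with $\|\mathbf{y}-\mathbf{y}'\|_\infty\le b$. Then for any $\zeta>0$, every player who is $\zeta$-satisfied in $\mathbf{x}$ with respect to $\mathbf{y}$ is also $\zeta'$-satisfied with respect to $\mathbf{y}'$, where $$\zeta'=\zeta+2m\gamma b.$$
   Context: Routing game $\Gamma$: directed graph $G=(V,E)$, $m=|E|$, $n$ players with demands $s_i=(s_i^1,s_i^2)$, edge latency functions $L_e$ that are $\gamma$-Lipschitz (e.g. $L_e(y)=\ell_e(y)+\tau_e$ with $\ell_e$ non-decreasing, convex, twice differentiable, $\ell_e(n)\le n$, $\gamma$-Lipschitz, and $\tau_e$ constant). $\mathcal{F}(s_i)\subseteq\{0,1\}^m$ integral unit $s_i^1$-to-$s_i^2$ flows. For congestion $\mathbf{y}$, $c_{\mathbf{x}_i}(\mathbf{y})=\sum_ex_{i,e}L_e(y_e)$; player $i$ with flow $\mathbf{x}_i$ is $\rho$-unsatisfied w.r.t. $\mathbf{y}$ if some $\mathbf{x}_i'\in\mathcal{F}(s_i)$ has $c_{\mathbf{x}_i'}(\mathbf{y}-\mathbf{x}_i+\mathbf{x}_i')\le c_{\mathbf{x}_i}(\mathbf{y})-\rho$, and $\rho$-satisfied otherwise. *)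

theory Defs
  imports "HOL-Analysis.Analysis"
begin

text \<open>A directed graph is given by a vertex set V, an edge set E and tail/head maps.
  Vectors indexed by edges are functions 'e => real (only values on E matter).\<close>

definition digraph :: "'v set \<Rightarrow> 'e set \<Rightarrow> ('e \<Rightarrow> 'v) \<Rightarrow> ('e \<Rightarrow> 'v) \<Rightarrow> bool" where
  "digraph V E src tgt \<longleftrightarrow> finite V \<and> finite E \<and> (\<forall>e\<in>E. src e \<in> V \<and> tgt e \<in> V)"

definition unit_flows ::
  "'v set \<Rightarrow> 'e set \<Rightarrow> ('e \<Rightarrow> 'v) \<Rightarrow> ('e \<Rightarrow> 'v) \<Rightarrow> 'v \<Rightarrow> 'v \<Rightarrow> ('e \<Rightarrow> real) set" where
  "unit_flows V E src tgt s t = {x.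
     (\<forall>e\<in>E. x e \<in> {0, 1}) \<and> (\<forall>e. e \<notin> E \<longrightarrow> x e = 0) \<and>
     (\<forall>v\<in>V. (\<Sum>e\<in>{e\<in>E. src e = v}. x e) - (\<Sum>e\<in>{e\<in>E. tgt e = v}. x e)
              = (if v = s then 1 else 0) - (if v = t then 1 else 0))}"

definition flow_cost :: "'e set \<Rightarrow> ('e \<Rightarrow> real \<Rightarrow> real) \<Rightarrow> ('e \<Rightarrow> real) \<Rightarrow> ('e \<Rightarrow> real) \<Rightarrow> real" where
  "flow_cost E L x y = (\<Sum>e\<in>E. x e * L e (y e))"

definition unsatisfied ::
  "'e set \<Rightarrow> ('e \<Rightarrow> real \<Rightarrow> real) \<Rightarrow> ('e \<Rightarrow> real) set \<Rightarrow> ('e \<Rightarrow> real) \<Rightarrow> ('e \<Rightarrow> real) \<Rightarrow> real \<Rightarrow> bool" where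
  "unsatisfied E L F x y \<rho> \<longleftrightarrow>
     (\<exists>x'\<in>F. flow_cost E L x' (\<lambda>e. y e - x e + x' e) \<le> flow_cost E L x y - \<rho>)"

definition satisfied ::
  "'e set \<Rightarrow> ('e \<Rightarrow> real \<Rightarrow> real) \<Rightarrow> ('e \<Rightarrow> real) set \<Rightarrow> ('e \<Rightarrow> real) \<Rightarrow> ('e \<Rightarrow> real) \<Rightarrow> real \<Rightarrow> bool" where
  "satisfied E L F x y \<rho> \<longleftrightarrow> \<not> unsatisfied E L F x y \<rho>"

end

theory Submission
  imports Defs
begin

lemma cost_close:
  assumes fin: "finite E"
    and lip: "\<forall>e\<in>E. \<gamma>-lipschitz_on UNIV (L e)"
    and z01: "\<forall>e\<in>E. z e \<in> {0, 1}"
    and cl: "\<forall>e\<in>E. \<bar>u e - v e\<bar> \<le> b"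
  shows "\<bar>flow_cost E L z u - flow_cost E L z v\<bar> \<le> real (card E) * \<gamma> * b"
proof -
  have "\<bar>flow_cost E L z u - flow_cost E L z v\<bar> = \<bar>\<Sum>e\<in>E. z e * (L e (u e) - L e (v e))\<bar>"
    unfolding flow_cost_def by (simp add: sum_subtractf[symmetric] algebra_simps)
  also have "\<dots> \<le> (\<Sum>e\<in>E. \<bar>z e * (L e (u e) - L e (v e))\<bar>)" by (rule sum_abs)
  also have "\<dots> \<le> (\<Sum>e\<in>E. \<gamma> * b)"
  proof (rule sum_mono)
    fix e assume e: "e \<in> E"
    have "dist (L e (u e)) (L e (v e)) \<le> \<gamma> * dist (u e) (v e)"
      using lip e by (auto intro: lipschitz_onD)
    moreover have "\<gamma> \<ge> 0" using lip e lipschitz_on_nonneg by blast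
    ultimately have "\<bar>L e (u e) - L e (v e)\<bar> \<le> \<gamma> * b"
      using cl e by (auto simp: dist_real_def intro: order_trans mult_left_mono)
    moreover have "\<bar>z e\<bar> \<le> 1" "\<bar>z e\<bar> \<ge> 0" using z01 e by auto
    moreover have "\<gamma> * b \<ge> 0"
      using \<open>\<gamma> \<ge> 0\<close> cl e by (meson abs_ge_zero order_trans zero_le_mult_iff)
    ultimately show "\<bar>z e * (L e (u e) - L e (v e))\<bar> \<le> \<gamma> * b"
      by (simp add: abs_mult mult_le_one) (metis mult_left_le_one_le abs_ge_zero order_trans mult_left_mono mult.commute)
  qed
  also have "\<dots> = real (card E) * \<gamma> * b" by simp
  finally show ?thesis .
qed

theorem lemmaB4:
  fixes V :: "'v set" and E :: "'e set" and src tgt :: "'e \<Rightarrow> 'v"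
    and L :: "'e \<Rightarrow> real \<Rightarrow> real" and \<gamma> :: real
    and n :: nat and s :: "nat \<Rightarrow> 'v \<times> 'v" and x :: "nat \<Rightarrow> 'e \<Rightarrow> real"
    and y y' :: "'e \<Rightarrow> real" and b \<zeta> :: real
  assumes graph: "digraph V E src tgt"
    and lip: "\<forall>e\<in>E. \<gamma>-lipschitz_on UNIV (L e)"
    and demands: "\<forall>i<n. fst (s i) \<in> V \<and> snd (s i) \<in> V"
    and flow: "\<forall>i<n. x i \<in> unit_flows V E src tgt (fst (s i)) (snd (s i))"
    and close: "\<forall>e\<in>E. \<bar>y e - y' e\<bar> \<le> b"
    and zeta: "\<zeta> > 0"
  shows "\<forall>i<n. satisfied E L (unit_flows V E src tgt (fst (s i)) (snd (s i))) (x i) y \<zeta>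
           \<longrightarrow> satisfied E L (unit_flows V E src tgt (fst (s i)) (snd (s i))) (x i) y'
                 (\<zeta> + 2 * real (card E) * \<gamma> * b)"
proof (intro allI impI)
  fix i assume i: "i < n"
  let ?F = "unit_flows V E src tgt (fst (s i)) (snd (s i))"
  assume sat: "satisfied E L ?F (x i) y \<zeta>"
  have fin: "finite E" using graph by (simp add: digraph_def)
  have x01: "\<forall>e\<in>E. x i e \<in> {0,1}" using flow i by (simp add: unit_flows_def)
  show "satisfied E L ?F (x i) y' (\<zeta> + 2 * real (card E) * \<gamma> * b)"
    unfolding satisfied_def unsatisfied_def
  proof
    assume "\<exists>x'\<in>?F. flow_cost E L x' (\<lambda>e. y' e - x i e + x' e)
        \<le> flow_cost E L (x i) y' - (\<zeta> + 2 * real (card E) * \<gamma> * b)"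
    then obtain x' where x': "x' \<in> ?F" and
      c: "flow_cost E L x' (\<lambda>e. y' e - x i e + x' e)
        \<le> flow_cost E L (x i) y' - (\<zeta> + 2 * real (card E) * \<gamma> * b)" by blast
    have x'01: "\<forall>e\<in>E. x' e \<in> {0,1}" using x' by (simp add: unit_flows_def)
    have c1: "\<bar>flow_cost E L (x i) y - flow_cost E L (x i) y'\<bar> \<le> real (card E) * \<gamma> * b"
      by (rule cost_close[OF fin lip x01 close])
    have cl2: "\<forall>e\<in>E. \<bar>(y e - x i e + x' e) - (y' e - x i e + x' e)\<bar> \<le> b" using close by simp
    have c2: "\<bar>flow_cost E L x' (\<lambda>e. y e - x i e + x' e) - flow_cost E L x' (\<lambda>e. y' e - x i e + x' e)\<bar>
        \<le> real (card E) * \<gamma> * b"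
      by (rule cost_close[OF fin lip x'01 cl2])
    have "flow_cost E L x' (\<lambda>e. y e - x i e + x' e) \<le> flow_cost E L (x i) y - \<zeta>"
      using c c1 c2 by linarith
    with x' have "unsatisfied E L ?F (x i) y \<zeta>" unfolding unsatisfied_def by blast
    with sat show False by (simp add: satisfied_def)
  qed
qed

end
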